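(* Place the almost positive roots of type $C_n$ in the off-diagonal entries of an $(n+1)\times(n+1)$ array via: entry $(1,j)$ ($2\le j\le n+1$) is $-\alpha_{j-1}$; entry $(i,j)$ with $2\le i<j$ is $\varepsilon_{i-1}-\varepsilon_{j-1}$; entry $(i,j)$ with $i>j$ is $\varepsilon_j+\varepsilon_{i-1}$. Let $i,j,k,l\in[1,n+1]$ be pairwise distinct with $i<k$ and $j<l$. Then the $(i,j)$-entry is $\underline c$-compatible with the $(k,l)$-entry if and only if the $(i,l)$-entry is not $\underline c$-compatible with the $(k,j)$-entry.
   Context: Type $C_n$: standard basis $\varepsilon_i$ of $\mathbb{R}^n$, simple roots $\alpha_i=\varepsilon_i-\varepsilon_{i+1}$ ($i<n$), $\alpha_n=2\varepsilon_n$, $\Pi$ the simple roots, $\Phi_+=\{\varepsilon_i\pm\varepsilon_j:i<j\}\cup\{2\varepsilon_i\}$, $\Phi_{\ge-1}=\Phi_+\sqcup(-\Pi)$. With simple reflections $s_i$ and $c=s_1\cdots s_n$, $\tau:\Phi_{\ge-1}\to\Phi_{\ge-1}$ is $\tau(-\alpha_i)=s_1\cdots s_{i-1}(\alpha_i)$, $\tau(s_n\cdots s_{i+1}(\alpha_i))=-\alpha_i$, $\tau(\alpha)=c(\alpha)$ otherwise. The $\underline c$-compatibility degree is the unique $\tau$-invariant function $\Phi_{\ge-1}^2\to\mathbb{Z}$ with $(-\alpha\|_{\underline c}-\alpha')=0$ for $\alpha,\alpha'\in\Pi$ and $(-\alpha\|_{\underline c}\beta)=[\beta:\alpha]$ (coefficient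 of $\alpha$ in $\beta$) for $\alpha\in\Pi,\beta\in\Phi_+$; two roots are $\underline c$-compatible if their degree is $0$. *)

theory Defs
  imports Complex_Main "HOL-Library.Function_Algebras"
begin

text \<open>Vectors of R^n are encoded as functions nat => real, with coordinates
  indexed by 1..n and value 0 at every other index.\<close>

type_synonym vec = "nat \<Rightarrow> real"

definition smul :: "real \<Rightarrow> vec \<Rightarrow> vec" where
  "smul c v = (\<lambda>k. c * v k)"

definition eps :: "nat \<Rightarrow> vec" where
  "eps i = (\<lambda>k. if k = i then 1 else 0)"

definition alpha :: "nat \<Rightarrow> nat \<Rightarrow> vec" where
  "alpha n i = (if i < n then eps i - eps (i + 1) else smul 2 (eps n))"

definition simple_roots :: "nat \<Rightarrow> vec set" where
  "simple_roots n = alpha n ` {1..n}"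

definition pos_roots :: "nat \<Rightarrow> vec set" where
  "pos_roots n =
     {eps i - eps j | i j. 1 \<le> i \<and> i < j \<and> j \<le> n}
   \<union> {eps i + eps j | i j. 1 \<le> i \<and> i < j \<and> j \<le> n}
   \<union> {smul 2 (eps i) | i. 1 \<le> i \<and> i \<le> n}"

definition almost_pos_roots :: "nat \<Rightarrow> vec set" where
  "almost_pos_roots n = pos_roots n \<union> uminus ` simple_roots n"

definition dotp :: "nat \<Rightarrow> vec \<Rightarrow> vec \<Rightarrow> real" where
  "dotp n u v = (\<Sum>k\<in>{1..n}. u k * v k)"

definition refl :: "nat \<Rightarrow> vec \<Rightarrow> vec \<Rightarrow> vec" where
  "refl n a v = v - smul (2 * dotp n v a / dotp n a a) a"

definition sref :: "nat \<Rightarrow> nat \<Rightarrow> vec \<Rightarrow> vec" where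
  "sref n i = refl n (alpha n i)"

definition sprod :: "nat \<Rightarrow> nat list \<Rightarrow> vec \<Rightarrow> vec" where
  "sprod n xs = foldr (\<lambda>i f. sref n i \<circ> f) xs id"

definition cox :: "nat \<Rightarrow> vec \<Rightarrow> vec" where
  "cox n = sprod n [1..<n+1]"

definition tau :: "nat \<Rightarrow> vec \<Rightarrow> vec" where
  "tau n b =
    (if \<exists>i\<in>{1..n}. b = - alpha n i then
       (let i = (SOME i. i \<in> {1..n} \<and> b = - alpha n i) in sprod n [1..<i] (alpha n i))
     else if \<exists>i\<in>{1..n}. b = sprod n (rev [i+1..<n+1]) (alpha n i) then
       (let i = (SOME i. i \<in> {1..n} \<and> b = sprod n (rev [i+1..<n+1]) (alpha n i)) in - alpha n i)
     else cox n b)"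

definition root_coeff :: "nat \<Rightarrow> vec \<Rightarrow> nat \<Rightarrow> int" where
  "root_coeff n b i =
     (THE c :: nat \<Rightarrow> int. (\<forall>k. k \<notin> {1..n} \<longrightarrow> c k = 0) \<and>
        b = (\<Sum>k\<in>{1..n}. smul (of_int (c k)) (alpha n k))) i"

definition compat_deg :: "nat \<Rightarrow> vec \<Rightarrow> vec \<Rightarrow> int" where
  "compat_deg n = (THE f :: vec \<Rightarrow> vec \<Rightarrow> int.
      (\<forall>x\<in>almost_pos_roots n. \<forall>y\<in>almost_pos_roots n. f (tau n x) (tau n y) = f x y)
    \<and> (\<forall>a\<in>simple_roots n. \<forall>a'\<in>simple_roots n. f (- a) (- a') = 0)
    \<and> (\<forall>i\<in>{1..n}. \<forall>b\<in>pos_roots n. f (- alpha n i) b = root_coeff n b i)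
    \<and> (\<forall>x y. x \<notin> almost_pos_roots n \<or> y \<notin> almost_pos_roots n \<longrightarrow> f x y = 0))"

definition compatible :: "nat \<Rightarrow> vec \<Rightarrow> vec \<Rightarrow> bool" where
  "compatible n x y \<longleftrightarrow> compat_deg n x y = 0"

definition entry :: "nat \<Rightarrow> nat \<Rightarrow> nat \<Rightarrow> vec" where
  "entry n i j =
     (if i = 1 then - alpha n (j - 1)
      else if i < j then eps (i - 1) - eps (j - 1)
      else eps j + eps (i - 1))"

end

theory Submission
  imports Defs
begin


lemma sum_vec_apply: "(\<Sum>k\<in>A. (f k :: vec)) t = (\<Sum>k\<in>A. f k t)"
  by (induction A rule: infinite_finite_induct) auto

definition ps :: "vec \<Rightarrow> nat \<Rightarrow> real" where
  "ps v m = (\<Sum>t\<in>{1..m}. v t)"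

lemma ps_eps: "ps (eps a) m = (if 1 \<le> a \<and> a \<le> m then 1 else 0)"
  unfolding ps_def eps_def by (simp add: sum.delta)

lemma ps_diff: "ps (u - v) m = ps u m - ps v m"
  unfolding ps_def by (simp add: sum_subtractf)
lemma ps_add: "ps (u + v) m = ps u m + ps v m"
  unfolding ps_def by (simp add: sum.distrib)
lemma ps_uminus: "ps (- u) m = - ps u m"
  unfolding ps_def by (simp add: sum_negf)
lemma ps_smul: "ps (smul c u) m = c * ps u m"
  unfolding ps_def smul_def by (simp add: sum_distrib_left)
lemma ps_sum: "ps (\<Sum>k\<in>A. f k) m = (\<Sum>k\<in>A. ps (f k) m)"
  unfolding ps_def sum_vec_apply by (rule sum.swap)

lemma ps_alpha: "1 \<le> k \<Longrightarrow> k \<le> n \<Longrightarrow> ps (alpha n k) m =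
   (if k < n then (if k = m then 1 else 0) else (if n \<le> m then 2 else 0))"
  unfolding alpha_def by (auto simp: ps_diff ps_eps ps_smul)

lemma ps_comb:
  assumes "m \<in> {1..n}"
  shows "ps (\<Sum>k\<in>{1..n}. smul (of_int (c k)) (alpha n k)) m = (if m < n then of_int (c m) else 2 * of_int (c n))"
proof -
  have "ps (\<Sum>k\<in>{1..n}. smul (of_int (c k)) (alpha n k)) m =
     (\<Sum>k\<in>{1..n}. of_int (c k) * (if k < n then (if k = m then 1 else 0) else (if n \<le> m then 2 else 0)))"
    by (simp add: ps_sum ps_smul ps_alpha)
  also have "\<dots> = (if m < n then of_int (c m) else 2 * of_int (c n))"
  proof (cases "m < n")
    case True
    then have "(\<Sum>k\<in>{1..n}. of_int (c k) * (if k < n then (if k = m then 1 else 0) else (if n \<le> m then 2 else 0)) :: real)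
       = (\<Sum>k\<in>{1..n}. if k = m then of_int (c m) else 0)"
      by (intro sum.cong) auto
    then show ?thesis using True assms by simp
  next
    case False
    then have "m = n" using assms by auto
    then have "(\<Sum>k\<in>{1..n}. of_int (c k) * (if k < n then (if k = m then 1 else 0) else (if n \<le> m then 2 else 0)) :: real)
       = (\<Sum>k\<in>{1..n}. if k = n then 2 * of_int (c n) else 0)"
      by (intro sum.cong) auto
    then show ?thesis using False assms \<open>m = n\<close> by simp
  qed
  finally show ?thesis .
qed

lemma ps_step: "1 \<le> t \<Longrightarrow> v t = ps v t - ps v (t - 1)"
proof -
  assume "1 \<le> t"
  then have "{1..t} = insert t {1..t-1}" by auto
  then show ?thesis unfolding ps_def using \<open>1 \<le> t\<close> by simp
qed

lemma vec_eq_ps: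
  assumes "\<And>t. t \<notin> {1..n} \<Longrightarrow> u t = 0" "\<And>t. t \<notin> {1..n} \<Longrightarrow> v t = 0"
    and "\<And>m. m \<in> {1..n} \<Longrightarrow> ps u m = ps v m"
  shows "u = v"
proof
  fix t
  show "u t = v t"
  proof (cases "t \<in> {1..n}")
    case True
    have "ps u (t-1) = ps v (t-1)"
    proof (cases "t = 1")
      case True then show ?thesis by (simp add: ps_def)
    next
      case False
      then have "t - 1 \<in> {1..n}" using \<open>t \<in> {1..n}\<close> by auto
      then show ?thesis using assms(3) by blast
    qed
    then show ?thesis using ps_step[of t u] ps_step[of t v] True assms(3)[of t] by auto
  qed (use assms in auto)
qed


lemma dotp_eps: "dotp n v (eps a) = (if a \<in> {1..n} then v a else 0)"
proof -
  have "dotp n v (eps a) = (\<Sum>k\<in>{1..n}. if k = a then v a else 0)"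
    unfolding dotp_def by (rule sum.cong) (auto simp: eps_def)
  then show ?thesis by (simp add: sum.delta)
qed
lemma dotp_diff: "dotp n v (a - b) = dotp n v a - dotp n v b"
  unfolding dotp_def by (simp add: sum_subtractf algebra_simps)
lemma dotp_smul: "dotp n v (smul c a) = c * dotp n v a"
  unfolding dotp_def smul_def by (simp add: sum_distrib_left algebra_simps)

lemma sref_swap:
  assumes "1 \<le> m" "m < n"
  shows "sref n m v = (\<lambda>t. if t = m then v (m+1) else if t = m+1 then v m else v t)"
proof -
  have a: "alpha n m = eps m - eps (m+1)" using assms by (simp add: alpha_def)
  have d1: "dotp n (alpha n m) (alpha n m) = 2"
    using assms by (simp add: a dotp_diff dotp_eps) (simp add: eps_def)
  have d2: "dotp n v (alpha n m) = v m - v (m+1)"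
    using assms by (simp add: a dotp_diff dotp_eps)
  show ?thesis
    unfolding sref_def refl_def d1 d2 by (rule ext) (auto simp: a smul_def eps_def field_simps)
qed

lemma sref_last:
  assumes "1 \<le> n"
  shows "sref n n v = (\<lambda>t. if t = n then - v n else v t)"
proof -
  have a: "alpha n n = smul 2 (eps n)" by (simp add: alpha_def)
  have d1: "dotp n (alpha n n) (alpha n n) = 4"
    using assms by (simp add: a dotp_smul dotp_eps) (simp add: eps_def smul_def)
  have d2: "dotp n v (alpha n n) = 2 * v n"
    using assms by (simp add: a dotp_smul dotp_eps)
  show ?thesis
    unfolding sref_def refl_def d1 d2 by (rule ext) (simp add: a smul_def eps_def)
qed

definition sw :: "nat \<Rightarrow> nat \<Rightarrow> nat" where
  "sw m a = (if a = m then m+1 else if a = m+1 then m else a)"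

lemma sref_swap_eps: "1 \<le> m \<Longrightarrow> m < n \<Longrightarrow> sref n m (eps a) = eps (sw m a)"
  by (rule ext) (auto simp: sref_swap eps_def sw_def)

lemma sref_last_eps: "1 \<le> n \<Longrightarrow> sref n n (eps a) = (if a = n then - eps n else eps a)"
  by (rule ext) (auto simp: sref_last eps_def)

lemma refl_lin:
  "refl n a (u - v) = refl n a u - refl n a v"
  "refl n a (u + v) = refl n a u + refl n a v"
  "refl n a (- u) = - refl n a u"
  "refl n a (smul c u) = smul c (refl n a u)"
  by (rule ext; simp add: refl_def dotp_def smul_def sum_subtractf sum.distrib sum_negf
      sum_distrib_left algebra_simps add_divide_distrib diff_divide_distrib)+

lemma sprod_Nil: "sprod n [] = id" by (simp add: sprod_def)
lemma sprod_append: "sprod n (xs @ ys) = sprod n xs \<circ> sprod n ys"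
  unfolding sprod_def by (induction xs) auto
lemma sprod_Cons: "sprod n (x # xs) = sref n x \<circ> sprod n xs"
  unfolding sprod_def by simp

lemma sprod_lin:
  "sprod n xs (u - v) = sprod n xs u - sprod n xs v"
  "sprod n xs (u + v) = sprod n xs u + sprod n xs v"
  "sprod n xs (- u) = - sprod n xs u"
  "sprod n xs (smul c u) = smul c (sprod n xs u)"
  by (induction xs) (simp_all add: sprod_Nil sprod_Cons sref_def refl_lin)

definition gg :: "nat \<Rightarrow> nat \<Rightarrow> nat" where
  "gg q a = (if a = q then 1 else if 1 \<le> a \<and> a < q then a + 1 else a)"

lemma sprod_up_eps: "1 \<le> q \<Longrightarrow> q \<le> n \<Longrightarrow> sprod n [1..<q] (eps a) = eps (gg q a)"
proof (induction q arbitrary: a rule: nat_induct_at_least)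
  case base then show ?case by (auto simp: sprod_Nil gg_def)
next
  case (Suc q)
  have "[1..<Suc q] = [1..<q] @ [q]" using Suc by simp
  then have "sprod n [1..<Suc q] (eps a) = sprod n [1..<q] (eps (sw q a))"
    using Suc by (simp add: sprod_append sprod_Cons sprod_Nil sref_swap_eps)
  also have "\<dots> = eps (gg q (sw q a))" using Suc by simp
  also have "gg q (sw q a) = gg (Suc q) a" using Suc by (auto simp: gg_def sw_def)
  finally show ?case .
qed

definition hh :: "nat \<Rightarrow> nat \<Rightarrow> nat \<Rightarrow> nat" where
  "hh n p a = (if p < a \<and> a \<le> n then a - 1 else a)"

lemma sprod_down_eps:
  assumes "1 \<le> p" "p \<le> n"
  shows "sprod n (rev [p..<n+1]) (eps a) = (if a = p then - eps n else eps (hh n p a))"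
  using assms
proof (induction "n - p" arbitrary: p a)
  case 0
  then have "p = n" by auto
  then show ?case using 0 by (simp add: sprod_Cons sprod_Nil sref_last_eps hh_def)
next
  case (Suc d)
  have sp: "Suc p \<le> n" "d = n - Suc p" using Suc by auto
  have IH: "\<And>a. sprod n (rev [Suc p..<n+1]) (eps a) = (if a = Suc p then - eps n else eps (hh n (Suc p) a))"
    using Suc.hyps(1)[OF sp(2)] sp by simp
  have "rev [p..<n+1] = rev [Suc p..<n+1] @ [p]" using Suc by (simp add: upt_rec)
  then have "sprod n (rev [p..<n+1]) (eps a) = sprod n (rev [Suc p..<n+1]) (eps (sw p a))"
    using Suc by (simp add: sprod_append sprod_Cons sprod_Nil sref_swap_eps)
  also have "\<dots> = (if sw p a = Suc p then - eps n else eps (hh n (Suc p) (sw p a)))"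
    by (rule IH)
  also have "\<dots> = (if a = p then - eps n else eps (hh n p a))"
    using Suc by (auto simp: sw_def hh_def)
  finally show ?case .
qed


lemma alpha_inj:
  assumes "k \<in> {1..n}" "k' \<in> {1..n}" "alpha n k = alpha n k'"
  shows "k = k'"
proof -
  have "ps (alpha n k) k = ps (alpha n k') k" using assms by simp
  then show ?thesis using assms(1,2) ps_alpha[of k n k] ps_alpha[of k' n k] by (auto split: if_splits)
qed

lemma ps_neg_alpha: "m \<in> {1..n} \<Longrightarrow> ps (- alpha n m) m < 0"
  by (auto simp: ps_uminus ps_alpha)

definition valid :: "nat \<Rightarrow> nat \<Rightarrow> nat \<Rightarrow> bool" where
  "valid n i j \<longleftrightarrow> i \<in> {1..n+1} \<and> j \<in> {1..n+1} \<and> i \<noteq> j"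

lemma smul2: "smul 2 (eps a) = eps a + eps a"
  by (rule ext) (simp add: smul_def)

lemma entry_pos_ps:
  assumes "valid n i j" "2 \<le> i"
  shows "ps (entry n i j) m \<ge> 0"
  using assms by (auto simp: entry_def valid_def ps_diff ps_add ps_eps)

lemma entry_not_neg:
  assumes "valid n i j" "2 \<le> i" "m \<in> {1..n}"
  shows "entry n i j \<noteq> - alpha n m"
  using entry_pos_ps[OF assms(1,2), of m] ps_neg_alpha[OF assms(3)] by auto

lemma special_eq:
  assumes "m \<in> {1..n}"
  shows "sprod n (rev [m+1..<n+1]) (alpha n m) = eps m + eps n"
proof (cases "m < n")
  case True
  then have "sprod n (rev [m+1..<n+1]) (alpha n m) = sprod n (rev [m+1..<n+1]) (eps m) - sprod n (rev [m+1..<n+1]) (eps (m+1))"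
    by (simp add: alpha_def sprod_lin)
  also have "\<dots> = eps m + eps n"
    using True assms sprod_down_eps[of "m+1" n m] sprod_down_eps[of "m+1" n "m+1"] by (simp add: hh_def)
  finally show ?thesis .
next
  case False
  then have "m = n" using assms by auto
  then show ?thesis by (simp add: sprod_Nil alpha_def smul2)
qed

lemma special_inj:
  assumes "eps m + eps n = eps m' + eps n"
  shows "m = m'"
proof -
  have "(eps m + eps n) m = (eps m' + eps n) m" using assms by simp
  then show ?thesis by (auto simp: eps_def split: if_splits)
qed

lemma entry_not_special:
  assumes "valid n i j" "2 \<le> i" "i \<le> n"
  shows "entry n i j \<noteq> eps m + eps n"
proof
  assume "entry n i j = eps m + eps n"
  then have "entry n i j n = (eps m + eps n) n" by simp
  then show False using assms by (auto simp: entry_def valid_def eps_def split: if_splits)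
qed

lemma tau_neg:
  assumes "m \<in> {1..n}"
  shows "tau n (- alpha n m) = sprod n [1..<m] (alpha n m)"
proof -
  have ex: "\<exists>i\<in>{1..n}. - alpha n m = - alpha n i" using assms by blast
  have "(SOME i. i \<in> {1..n} \<and> - alpha n m = - alpha n i) = m"
    by (rule some_equality) (use assms alpha_inj in auto)
  then show ?thesis unfolding tau_def using ex by (simp add: Let_def)
qed

lemma tau_spec:
  assumes "m \<in> {1..n}" "\<not> (\<exists>i\<in>{1..n}. b = - alpha n i)"
    and "b = sprod n (rev [m+1..<n+1]) (alpha n m)"
  shows "tau n b = - alpha n m"
proof -
  have ex: "\<exists>i\<in>{1..n}. b = sprod n (rev [i+1..<n+1]) (alpha n i)" using assms by blast
  have "(SOME i. i \<in> {1..n} \<and> b = sprod n (rev [i+1..<n+1]) (alpha n i)) = m"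
  proof (rule some_equality)
    fix i assume "i \<in> {1..n} \<and> b = sprod n (rev [i+1..<n+1]) (alpha n i)"
    then have "eps i + eps n = eps m + eps n" using assms special_eq by metis
    then show "i = m" using special_inj by blast
  qed (use assms in auto)
  then show ?thesis unfolding tau_def using ex assms(2) by (simp add: Let_def)
qed

lemma tau_other:
  assumes "\<not> (\<exists>i\<in>{1..n}. b = - alpha n i)"
    and "\<not> (\<exists>i\<in>{1..n}. b = eps i + eps n)"
  shows "tau n b = cox n b"
proof -
  have "\<not> (\<exists>i\<in>{1..n}. b = sprod n (rev [i+1..<n+1]) (alpha n i))"
    using assms(2) special_eq by auto
  then show ?thesis unfolding tau_def using assms(1) by simp
qed

lemma cox_eps:
  assumes "1 \<le> a" "a \<le> n"
  shows "cox n (eps a) = (if a = n then - eps 1 else eps (a+1))"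
proof -
  have "[1..<n+1] = [1..<n] @ [n]" using assms by simp
  then have "cox n (eps a) = sprod n [1..<n] (sref n n (eps a))"
    by (simp add: cox_def sprod_append sprod_Cons sprod_Nil)
  also have "\<dots> = (if a = n then - eps 1 else eps (a+1))"
    using assms sprod_up_eps[of n n a] sprod_up_eps[of n n n] by (auto simp: sref_last_eps sprod_lin gg_def)
  finally show ?thesis .
qed

definition TT :: "nat \<Rightarrow> nat \<Rightarrow> nat" where
  "TT n x = (if x = n+1 then 1 else x+1)"

lemma tau_entry:
  assumes "valid n i j"
  shows "tau n (entry n i j) = entry n (TT n i) (TT n j)"
proof -
  consider "i = 1" | "i = n+1" "i \<noteq> 1" | "2 \<le> i" "i \<le> n" using assms by (force simp: valid_def)
  then show ?thesis
  proof cases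
    case 1
    then have e: "entry n i j = - alpha n (j-1)" by (simp add: entry_def)
    have m: "j - 1 \<in> {1..n}" using assms 1 by (auto simp: valid_def)
    show ?thesis
    proof (cases "j - 1 < n")
      case True
      have "sprod n [1..<j-1] (alpha n (j-1)) = eps 1 - eps j"
        using True m sprod_up_eps[of "j-1" n "j-1"] sprod_up_eps[of "j-1" n "j"] by (auto simp: alpha_def sprod_lin gg_def)
      then show ?thesis using e tau_neg[OF m] 1 True m
        by (auto simp: entry_def TT_def)
    next
      case False
      then have "j - 1 = n" using m by auto
      then have "sprod n [1..<j-1] (alpha n (j-1)) = smul 2 (eps 1)"
        using m sprod_up_eps[of "j-1" n "j-1"] by (auto simp: alpha_def sprod_lin gg_def)
      then have "sprod n [1..<j-1] (alpha n (j-1)) = eps 1 + eps 1" by (simp only: smul2)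
      then show ?thesis using e tau_neg[OF m] 1 False m \<open>j - 1 = n\<close>
        by (auto simp: entry_def TT_def)
    qed
  next
    case 2
    then have ji: "j < i" "1 \<le> j" using assms by (auto simp: valid_def)
    then have e: "entry n i j = eps j + eps n" using 2 by (simp add: entry_def)
    have m: "j \<in> {1..n}" using ji 2 by auto
    have nn: "\<not> (\<exists>k\<in>{1..n}. entry n i j = - alpha n k)"
      using entry_not_neg[OF assms] 2 by auto
    have "tau n (entry n i j) = - alpha n j"
      by (rule tau_spec[OF m nn]) (simp only: e special_eq[OF m])
    then show ?thesis using 2 ji by (simp add: entry_def TT_def)
  next
    case 3
    have nn: "\<not> (\<exists>k\<in>{1..n}. entry n i j = - alpha n k)"
      using entry_not_neg[OF assms] 3 by auto
    have ns: "\<not> (\<exists>k\<in>{1..n}. entry n i j = eps k + eps n)"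
      using entry_not_special[OF assms] 3 by auto
    have t: "tau n (entry n i j) = cox n (entry n i j)" by (rule tau_other[OF nn ns])
    show ?thesis
    proof (cases "i < j")
      case True
      then have e: "entry n i j = eps (i-1) - eps (j-1)" using 3 by (simp add: entry_def)
      have "cox n (eps (i - 1) - eps (j - 1)) = cox n (eps (i-1)) - cox n (eps (j-1))"
        by (simp add: cox_def sprod_lin)
      then show ?thesis using t e 3 True assms
        by (auto simp: cox_eps entry_def TT_def valid_def)
    next
      case False
      then have ji: "j < i" using assms by (auto simp: valid_def)
      then have e: "entry n i j = eps j + eps (i-1)" using 3 by (simp add: entry_def)
      have "cox n (eps j + eps (i-1)) = cox n (eps j) + cox n (eps (i-1))"
        by (simp add: cox_def sprod_lin)
      then show ?thesis using t e 3 ji assms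
        by (auto simp: cox_eps entry_def TT_def valid_def)
    qed
  qed
qed


lemma entry_in_AP:
  assumes "valid n i j"
  shows "entry n i j \<in> almost_pos_roots n"
proof (cases "i = 1")
  case True
  then have "entry n i j = - alpha n (j-1)" by (simp add: entry_def)
  moreover have "j - 1 \<in> {1..n}" using assms True by (auto simp: valid_def)
  ultimately show ?thesis unfolding almost_pos_roots_def simple_roots_def by blast
next
  case False
  then have i2: "2 \<le> i" using assms by (auto simp: valid_def)
  show ?thesis
  proof (cases "i < j")
    case True
    then have "entry n i j = eps (i-1) - eps (j-1)" using i2 by (simp add: entry_def)
    moreover have "1 \<le> i - 1 \<and> i - 1 < j - 1 \<and> j - 1 \<le> n" using assms True i2 by (auto simp: valid_def)
    ultimately show ?thesis unfolding almost_pos_roots_def pos_roots_def by blast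
  next
    case False
    then have ji: "j < i" using assms by (auto simp: valid_def)
    then have e: "entry n i j = eps j + eps (i-1)" using i2 by (simp add: entry_def)
    show ?thesis
    proof (cases "j < i - 1")
      case True
      moreover have "1 \<le> j \<and> i - 1 \<le> n" using assms by (auto simp: valid_def)
      ultimately show ?thesis unfolding almost_pos_roots_def pos_roots_def e by blast
    next
      case False
      then have "i - 1 = j" using ji by auto
      then have "entry n i j = smul 2 (eps j)" using e by (simp add: smul2)
      moreover have "1 \<le> j \<and> j \<le> n" using assms ji by (auto simp: valid_def)
      ultimately show ?thesis unfolding almost_pos_roots_def pos_roots_def by blast
    qed
  qed
qed

lemma neg_entry: "m \<in> {1..n} \<Longrightarrow> - alpha n m = entry n 1 (m+1) \<and> valid n 1 (m+1)"
  by (auto simp: entry_def valid_def)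

lemma pos_roots_entry:
  assumes "b \<in> pos_roots n"
  shows "\<exists>k l. valid n k l \<and> 2 \<le> k \<and> b = entry n k l"
  using assms unfolding pos_roots_def
proof (elim UnE CollectE exE conjE)
  fix i j assume h: "b = eps i - eps j" "1 \<le> i" "i < j" "j \<le> n"
  then have "valid n (i+1) (j+1) \<and> 2 \<le> i+1 \<and> b = entry n (i+1) (j+1)" by (simp add: entry_def valid_def)
  then show ?thesis by blast
next
  fix i j assume h: "b = eps i + eps j" "1 \<le> i" "i < j" "j \<le> n"
  then have "valid n (j+1) i \<and> 2 \<le> j+1 \<and> b = entry n (j+1) i" by (auto simp: entry_def valid_def)
  then show ?thesis by blast
next
  fix i assume h: "b = smul 2 (eps i)" "1 \<le> i" "i \<le> n"
  then have "valid n (i+1) i \<and> 2 \<le> i+1 \<and> b = entry n (i+1) i" by (auto simp: entry_def valid_def smul2)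
  then show ?thesis by blast
qed

lemma AP_entry:
  assumes "x \<in> almost_pos_roots n"
  shows "\<exists>i j. valid n i j \<and> x = entry n i j"
  using assms unfolding almost_pos_roots_def simple_roots_def
  using pos_roots_entry neg_entry by blast

lemma entry_inj:
  assumes "valid n i j" "valid n k l" "entry n i j = entry n k l"
  shows "i = k \<and> j = l"
proof -
  have ij: "1 \<le> i" "i \<le> n+1" "1 \<le> j" "j \<le> n+1" "i \<noteq> j"
    and kl: "1 \<le> k" "k \<le> n+1" "1 \<le> l" "l \<le> n+1" "k \<noteq> l" using assms by (auto simp: valid_def)
  consider "i = 1" "k = 1" | "i = 1" "k \<noteq> 1" | "i \<noteq> 1" "k = 1" | "i \<noteq> 1" "k \<noteq> 1" by blast
  then show ?thesis
  proof cases
    case 1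
    then have "alpha n (j-1) = alpha n (l-1)" using assms by (simp add: entry_def)
    moreover have "j - 1 \<in> {1..n}" "l - 1 \<in> {1..n}" using 1 ij kl by auto
    ultimately have "j - 1 = l - 1" using alpha_inj by blast
    then show ?thesis using 1 ij kl by auto
  next
    case 2
    have "2 \<le> k" "j - 1 \<in> {1..n}" using 2 ij kl by auto
    then have "entry n k l \<noteq> - alpha n (j-1)" using entry_not_neg[OF assms(2)] by blast
    then show ?thesis using assms 2 by (simp add: entry_def)
  next
    case 3
    have "2 \<le> i" "l - 1 \<in> {1..n}" using 3 ij kl by auto
    then have "entry n i j \<noteq> - alpha n (l-1)" using entry_not_neg[OF assms(1)] by blast
    then show ?thesis using assms 3 by (simp add: entry_def)
  next
    case 4
    have e: "\<And>t. entry n i j t = entry n k l t" using assms by simp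
    have p: "ps (entry n i j) n = ps (entry n k l) n" using assms by simp
    have pn: "ps (entry n i j) n = (if i < j then 0 else 2)" "ps (entry n k l) n = (if k < l then 0 else 2)"
      using 4 ij kl by (auto simp: entry_def ps_diff ps_add ps_eps)
    have "(i < j) = (k < l)" using p pn by (auto split: if_splits)
    show ?thesis
    proof (cases "i < j")
      case True
      then have "k < l" using \<open>(i < j) = (k < l)\<close> by simp
      have v: "\<And>t. (eps (i-1) - eps (j-1)) t = (eps (k-1) - eps (l-1)) t"
        using e True \<open>k < l\<close> 4 by (simp add: entry_def)
      have "i - 1 = k - 1" using v[of "i-1"] True \<open>k < l\<close> ij kl by (auto simp: eps_def split: if_splits)
      moreover have "j - 1 = l - 1" using v[of "j-1"] True \<open>k < l\<close> ij kl by (auto simp: eps_def split: if_splits)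
      ultimately show ?thesis using ij kl by auto
    next
      case False
      then have "\<not> k < l" using \<open>(i < j) = (k < l)\<close> by simp
      have v: "\<And>t. (eps j + eps (i-1)) t = (eps l + eps (k-1)) t"
        using e False \<open>\<not> k < l\<close> 4 by (simp add: entry_def)
      have "j = l" using v[of j] v[of l] False \<open>\<not> k < l\<close> ij kl by (auto simp: eps_def split: if_splits; presburger)
      moreover have "i - 1 = k - 1" using v[of "i-1"] \<open>j = l\<close> by (auto simp: eps_def split: if_splits)
      ultimately show ?thesis using ij kl by auto
    qed
  qed
qed


definition ce :: "nat \<Rightarrow> nat \<Rightarrow> nat \<Rightarrow> nat \<Rightarrow> int" where
  "ce n a b m = (if a < b then (if a - 1 \<le> m \<and> m < b - 1 then 1 else 0)
     else (if m < n then (if b \<le> m then 1 else 0) + (if a - 1 \<le> m then 1 else 0) else 1))"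

lemma ps_entry:
  assumes "valid n a b" "2 \<le> a" "m \<in> {1..n}"
  shows "ps (entry n a b) m = (if m < n then of_int (ce n a b m) else 2 * of_int (ce n a b n))"
  using assms by (auto simp: entry_def valid_def ps_diff ps_add ps_eps ce_def)

lemma entry_zero_out:
  assumes "valid n a b" "t \<notin> {1..n}"
  shows "entry n a b t = 0"
  using assms by (auto simp: entry_def valid_def eps_def alpha_def smul_def)

lemma comb_zero_out:
  assumes "t \<notin> {1..n}"
  shows "(\<Sum>k\<in>{1..n}. smul (of_int (c k)) (alpha n k)) t = 0"
  unfolding sum_vec_apply
  by (rule sum.neutral) (use assms in \<open>auto simp: eps_def alpha_def smul_def\<close>)

lemma root_coeff_entry:
  assumes "valid n a b" "2 \<le> a" "m \<in> {1..n}"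
  shows "root_coeff n (entry n a b) m = ce n a b m"
proof -
  define c0 where "c0 = (\<lambda>k. if k \<in> {1..n} then ce n a b k else 0)"
  let ?P = "\<lambda>c :: nat \<Rightarrow> int. (\<forall>k. k \<notin> {1..n} \<longrightarrow> c k = 0) \<and>
        entry n a b = (\<Sum>k\<in>{1..n}. smul (of_int (c k)) (alpha n k))"
  have "(THE c. ?P c) = c0"
  proof (rule the_equality)
    show "?P c0"
    proof
      show "\<forall>k. k \<notin> {1..n} \<longrightarrow> c0 k = 0" by (simp add: c0_def)
      show "entry n a b = (\<Sum>k\<in>{1..n}. smul (of_int (c0 k)) (alpha n k))"
      proof (rule vec_eq_ps[of n])
        fix m assume m: "m \<in> {1..n}"
        show "ps (entry n a b) m = ps (\<Sum>k\<in>{1..n}. smul (of_int (c0 k)) (alpha n k)) m"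
          using m assms ps_comb[OF m, of c0] by (simp add: ps_entry c0_def)
      qed (use entry_zero_out[OF assms(1)] comb_zero_out in auto)
    qed
  next
    fix c assume Pc: "?P c"
    show "c = c0"
    proof
      fix k show "c k = c0 k"
      proof (cases "k \<in> {1..n}")
        case True
        have "ps (entry n a b) k = ps (\<Sum>k\<in>{1..n}. smul (of_int (c k)) (alpha n k)) k"
          using Pc by metis
        then have "(if k < n then of_int (ce n a b k) else 2 * of_int (ce n a b n) :: real)
            = (if k < n then of_int (c k) else 2 * of_int (c n))"
          using True assms ps_comb[OF True, of c] by (simp add: ps_entry)
        then show ?thesis using True by (auto simp: c0_def split: if_splits)
      next
        case False then show ?thesis using Pc unfolding c0_def by auto
      qed
    qed
  qed
  then show ?thesis unfolding root_coeff_def using assms(3) by (simp add: c0_def)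
qed


definition dif :: "nat \<Rightarrow> nat \<Rightarrow> nat \<Rightarrow> nat" where
  "dif n i x = (x + (n+1) - i) mod (n+1)"

lemma dif_eq: "i \<in> {1..n+1} \<Longrightarrow> x \<in> {1..n+1} \<Longrightarrow> dif n i x = (if i \<le> x then x - i else x + (n+1) - i)"
proof -
  assume a: "i \<in> {1..n+1}" "x \<in> {1..n+1}"
  show ?thesis
  proof (cases "i \<le> x")
    case True
    then have eq: "x + (n+1) - i = (x - i) + (n+1)" by auto
    have "x - i < n + 1" using a by auto
    then show ?thesis using True unfolding dif_def eq mod_add_self2 by simp
  next
    case False
    then show ?thesis using a unfolding dif_def by simp
  qed
qed

definition Rot :: "nat \<Rightarrow> nat \<Rightarrow> nat \<Rightarrow> nat" where
  "Rot n r x = (x - 1 + r) mod (n+1) + 1"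

lemma Rot_0: "x \<in> {1..n+1} \<Longrightarrow> Rot n 0 x = x"
  by (auto simp: Rot_def)

lemma Rot_range: "Rot n r x \<in> {1..n+1}"
  by (auto simp: Rot_def)

lemma Rot_Suc: "1 \<le> x \<Longrightarrow> Rot n (Suc r) x = TT n (Rot n r x)"
proof -
  assume "1 \<le> x"
  then have "x - 1 + Suc r = Suc (x - 1 + r)" by simp
  then show ?thesis unfolding Rot_def TT_def by (simp add: mod_Suc)
qed

lemma Rot_dif:
  assumes "i \<in> {1..n+1}" "x \<in> {1..n+1}"
  shows "Rot n (n + 2 - i) x = dif n i x + 1"
proof (cases "i \<le> x")
  case True
  then have eq: "x - 1 + (n + 2 - i) = (x - i) + (n+1)" using assms by auto
  have "x - i < n + 1" using assms by auto
  then show ?thesis using True assms unfolding Rot_def eq mod_add_self2 by (simp add: dif_eq)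
next
  case False
  then have "x - 1 + (n + 2 - i) = x + (n+1) - i" using assms by auto
  moreover have "x + (n+1) - i < n + 1" using False by auto
  ultimately show ?thesis using False assms by (simp add: Rot_def dif_eq)
qed

lemma valid_TT: "valid n i j \<Longrightarrow> valid n (TT n i) (TT n j)"
  by (auto simp: valid_def TT_def)

lemma valid_Rot: "valid n i j \<Longrightarrow> valid n (Rot n r i) (Rot n r j)"
proof (induction r)
  case 0 then show ?case by (simp add: Rot_0 valid_def)
next
  case (Suc r)
  then show ?case using valid_TT[OF Suc.IH[OF Suc.prems]] Rot_Suc[of i n r] Rot_Suc[of j n r] Suc.prems
    by (simp add: valid_def)
qed

lemma dif_TT: "i \<in> {1..n+1} \<Longrightarrow> x \<in> {1..n+1} \<Longrightarrow> dif n (TT n i) (TT n x) = dif n i x"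
  unfolding TT_def by (auto simp: dif_eq)

definition Dpos :: "nat \<Rightarrow> nat \<Rightarrow> nat \<Rightarrow> nat \<Rightarrow> nat \<Rightarrow> int" where
  "Dpos n i j k l = (if dif n i k = 0 then 0
      else root_coeff n (entry n (dif n i k + 1) (dif n i l + 1)) (dif n i j))"

definition PP :: "nat \<Rightarrow> (vec \<Rightarrow> vec \<Rightarrow> int) \<Rightarrow> bool" where
  "PP n f \<longleftrightarrow> (\<forall>x\<in>almost_pos_roots n. \<forall>y\<in>almost_pos_roots n. f (tau n x) (tau n y) = f x y)
    \<and> (\<forall>a\<in>simple_roots n. \<forall>a'\<in>simple_roots n. f (- a) (- a') = 0)
    \<and> (\<forall>i\<in>{1..n}. \<forall>b\<in>pos_roots n. f (- alpha n i) b = root_coeff n b i)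
    \<and> (\<forall>x y. x \<notin> almost_pos_roots n \<or> y \<notin> almost_pos_roots n \<longrightarrow> f x y = 0)"

lemma uniq:
  assumes "PP n f" "valid n i j" "valid n k l"
  shows "f (entry n i j) (entry n k l) = Dpos n i j k l"
proof -
  have inv: "\<And>x y. x \<in> almost_pos_roots n \<Longrightarrow> y \<in> almost_pos_roots n \<Longrightarrow> f (tau n x) (tau n y) = f x y"
    using assms(1) unfolding PP_def by blast
  have rot: "f (entry n i j) (entry n k l) = f (entry n (Rot n r i) (Rot n r j)) (entry n (Rot n r k) (Rot n r l))" for r
  proof (induction r)
    case 0 then show ?case using assms by (simp add: Rot_0 valid_def)
  next
    case (Suc r)
    have v1: "valid n (Rot n r i) (Rot n r j)" and v2: "valid n (Rot n r k) (Rot n r l)"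
      using valid_Rot assms by blast+
    have "f (entry n (Rot n (Suc r) i) (Rot n (Suc r) j)) (entry n (Rot n (Suc r) k) (Rot n (Suc r) l))
      = f (tau n (entry n (Rot n r i) (Rot n r j))) (tau n (entry n (Rot n r k) (Rot n r l)))"
      using assms by (simp add: tau_entry[OF v1] tau_entry[OF v2] Rot_Suc valid_def)
    also have "\<dots> = f (entry n (Rot n r i) (Rot n r j)) (entry n (Rot n r k) (Rot n r l))"
      by (rule inv) (use entry_in_AP v1 v2 in auto)
    finally show ?case using Suc.IH by simp
  qed
  have ij: "i \<in> {1..n+1}" "j \<in> {1..n+1}" "i \<noteq> j" and kl: "k \<in> {1..n+1}" "l \<in> {1..n+1}" "k \<noteq> l"
    using assms by (auto simp: valid_def)
  let ?r = "n + 2 - i"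
  have R: "Rot n ?r x = dif n i x + 1" if "x \<in> {1..n+1}" for x using Rot_dif ij that by blast
  have Ri: "Rot n ?r i = 1" using R[OF ij(1)] ij by (simp add: dif_eq)
  have jm: "dif n i j \<in> {1..n}" using ij by (auto simp: dif_eq)
  have e1: "entry n 1 (dif n i j + 1) = - alpha n (dif n i j)" by (simp add: entry_def)
  have main: "f (entry n i j) (entry n k l) = f (- alpha n (dif n i j)) (entry n (dif n i k + 1) (dif n i l + 1))"
    using rot[of ?r] Ri R[OF ij(2)] R[OF kl(1)] R[OF kl(2)] e1 by simp
  have vkl: "valid n (dif n i k + 1) (dif n i l + 1)" using valid_Rot[OF assms(3), of ?r] R kl by simp
  show ?thesis
  proof (cases "dif n i k = 0")
    case True
    have lm: "dif n i l \<in> {1..n}" using vkl True by (auto simp: valid_def)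
    have "entry n (dif n i k + 1) (dif n i l + 1) = - alpha n (dif n i l)" using True by (simp add: entry_def)
    moreover have "alpha n (dif n i j) \<in> simple_roots n" "alpha n (dif n i l) \<in> simple_roots n"
      using jm lm by (auto simp: simple_roots_def)
    ultimately show ?thesis using main assms(1) True unfolding PP_def Dpos_def by auto
  next
    case False
    have "entry n (dif n i k + 1) (dif n i l + 1) \<in> almost_pos_roots n" using entry_in_AP[OF vkl] .
    moreover have "2 \<le> dif n i k + 1" using False by simp
    then have "entry n (dif n i k + 1) (dif n i l + 1) \<notin> uminus ` simple_roots n"
      using entry_not_neg[OF vkl] unfolding simple_roots_def by blast
    ultimately have "entry n (dif n i k + 1) (dif n i l + 1) \<in> pos_roots n"
      unfolding almost_pos_roots_def by blast
    then show ?thesis using main assms(1) False jm unfolding PP_def Dpos_def by auto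
  qed
qed

definition posn :: "nat \<Rightarrow> vec \<Rightarrow> nat \<times> nat" where
  "posn n x = (SOME p. valid n (fst p) (snd p) \<and> x = entry n (fst p) (snd p))"

lemma posn_entry: "valid n i j \<Longrightarrow> posn n (entry n i j) = (i, j)"
  unfolding posn_def
  by (rule some_equality) (auto dest: entry_inj)

definition gfun :: "nat \<Rightarrow> vec \<Rightarrow> vec \<Rightarrow> int" where
  "gfun n x y = (if x \<in> almost_pos_roots n \<and> y \<in> almost_pos_roots n then
      Dpos n (fst (posn n x)) (snd (posn n x)) (fst (posn n y)) (snd (posn n y)) else 0)"

lemma gfun_entry: "valid n i j \<Longrightarrow> valid n k l \<Longrightarrow> gfun n (entry n i j) (entry n k l) = Dpos n i j k l"
  by (simp add: gfun_def posn_entry entry_in_AP)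

lemma dif_1: "x \<in> {1..n+1} \<Longrightarrow> dif n 1 x = x - 1"
  by (simp add: dif_eq)

lemma PP_g: "PP n (gfun n)"
  unfolding PP_def
proof (intro conjI ballI allI impI)
  fix x y assume "x \<in> almost_pos_roots n" "y \<in> almost_pos_roots n"
  then obtain i j k l where v: "valid n i j" "valid n k l" and xy: "x = entry n i j" "y = entry n k l"
    using AP_entry by metis
  have "dif n (TT n i) (TT n t) = dif n i t" if "t \<in> {i,j,k,l}" for t
    using dif_TT v that unfolding valid_def by blast
  then have "Dpos n (TT n i) (TT n j) (TT n k) (TT n l) = Dpos n i j k l"
    unfolding Dpos_def by simp
  then show "gfun n (tau n x) (tau n y) = gfun n x y"
    using v by (simp add: xy tau_entry gfun_entry valid_TT)
next
  fix a a' assume "a \<in> simple_roots n" "a' \<in> simple_roots n"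
  then obtain m m' where m: "m \<in> {1..n}" "m' \<in> {1..n}" "a = alpha n m" "a' = alpha n m'"
    unfolding simple_roots_def by blast
  show "gfun n (- a) (- a') = 0"
    using neg_entry[OF m(1)] neg_entry[OF m(2)] m
    by (simp add: gfun_entry Dpos_def dif_def)
next
  fix m b assume m: "m \<in> {1..n}" and b: "b \<in> pos_roots n"
  obtain k l where v: "valid n k l" "2 \<le> k" "b = entry n k l" using pos_roots_entry[OF b] by blast
  have "dif n 1 k = k - 1" "dif n 1 l = l - 1" "dif n 1 (m+1) = m"
    using v m dif_1[of k n] dif_1[of l n] dif_1[of "m+1" n] by (auto simp: valid_def)
  moreover have "Suc (l - Suc 0) = l" using v by (auto simp: valid_def)
  ultimately show "gfun n (- alpha n m) b = root_coeff n b m"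
    using neg_entry[OF m] v by (simp add: gfun_entry Dpos_def)
next
  fix x y :: vec
  assume "x \<notin> almost_pos_roots n \<or> y \<notin> almost_pos_roots n"
  then show "gfun n x y = 0" by (auto simp: gfun_def)
qed

lemma compat_deg_eq: "compat_deg n = gfun n"
proof -
  have "compat_deg n = (THE f. PP n f)" unfolding compat_deg_def PP_def by simp
  also have "\<dots> = gfun n"
  proof (rule the_equality)
    show "PP n (gfun n)" by (rule PP_g)
  next
    fix f assume P: "PP n f"
    show "f = gfun n"
    proof (intro ext)
      fix x y
      show "f x y = gfun n x y"
      proof (cases "x \<in> almost_pos_roots n \<and> y \<in> almost_pos_roots n")
        case True
        then obtain i j k l where v: "valid n i j" "valid n k l" and xy: "x = entry n i j" "y = entry n k l"
          using AP_entry by metis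
        show ?thesis using uniq[OF P v] gfun_entry[OF v] xy by simp
      next
        case False
        then show ?thesis using P PP_g unfolding PP_def by metis
      qed
    qed
  qed
  finally show ?thesis .
qed


lemma ce_key:
  assumes "J \<in> {1..n}" "K \<in> {1..n}" "L \<in> {1..n}" "J \<noteq> K" "J \<noteq> L" "K \<noteq> L"
  shows "(ce n (K+1) (L+1) J = 0) \<longleftrightarrow> \<not> (ce n (K+1) (J+1) L = 0)"
  using assms unfolding ce_def by auto

lemma compatible_entry:
  assumes "valid n i j" "valid n i l" "valid n k l" "valid n k j" "i \<noteq> k" 
  shows "compatible n (entry n i j) (entry n k l) \<longleftrightarrow> ce n (dif n i k + 1) (dif n i l + 1) (dif n i j) = 0"
proof -
  have ij: "i \<in> {1..n+1}" "j \<in> {1..n+1}" "k \<in> {1..n+1}" "l \<in> {1..n+1}" "i \<noteq> j" "i \<noteq> l"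
    using assms by (auto simp: valid_def)
  have d0: "dif n i k \<noteq> 0" using ij assms(5) by (auto simp: dif_eq)
  have vkl: "valid n (dif n i k + 1) (dif n i l + 1)"
    using valid_Rot[OF assms(3), of "n + 2 - i"] Rot_dif ij by simp
  have jm: "dif n i j \<in> {1..n}" using ij by (auto simp: dif_eq)
  have "compatible n (entry n i j) (entry n k l) \<longleftrightarrow> Dpos n i j k l = 0"
    unfolding compatible_def compat_deg_eq using gfun_entry assms by simp
  also have "\<dots> \<longleftrightarrow> ce n (dif n i k + 1) (dif n i l + 1) (dif n i j) = 0"
    unfolding Dpos_def using d0 root_coeff_entry[OF vkl _ jm] by simp
  finally show ?thesis .
qed

theorem lemma4p9:
  fixes n i j k l :: nat
  assumes "i \<in> {1..n+1}" and "j \<in> {1..n+1}" and "k \<in> {1..n+1}" and "l \<in> {1..n+1}"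
    and "i \<noteq> j" and "i \<noteq> k" and "i \<noteq> l" and "j \<noteq> k" and "j \<noteq> l" and "k \<noteq> l"
    and "i < k" and "j < l"
  shows "compatible n (entry n i j) (entry n k l) \<longleftrightarrow>
         \<not> compatible n (entry n i l) (entry n k j)"
proof -
  have v: "valid n i j" "valid n i l" "valid n k l" "valid n k j" using assms by (auto simp: valid_def)
  have c1: "compatible n (entry n i j) (entry n k l) \<longleftrightarrow> ce n (dif n i k + 1) (dif n i l + 1) (dif n i j) = 0"
    using compatible_entry[OF v assms(6)] .
  have c2: "compatible n (entry n i l) (entry n k j) \<longleftrightarrow> ce n (dif n i k + 1) (dif n i j + 1) (dif n i l) = 0"
    using compatible_entry[OF v(2,1,4,3) assms(6)] .
  have d: "dif n i j \<in> {1..n}" "dif n i k \<in> {1..n}" "dif n i l \<in> {1..n}"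
    "dif n i j \<noteq> dif n i k" "dif n i j \<noteq> dif n i l" "dif n i k \<noteq> dif n i l"
    using assms by (auto simp: dif_eq)
  show ?thesis unfolding c1 c2 by (rule ce_key[OF d])
qed

end
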